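(* Let $G_S(z)=\frac{N_S(z)}{D_S(z)}$ and $G_T(z)=\frac{N_T(z)}{D_T(z)}$ be rational transfer functions (in the forward shift operator $z$) of two discrete-time, single-input single-output, linear time-invariant systems (the source system and the target system), each written with coprime real polynomials and nonzero numerator. Assume both $G_S$ and $G_T$ are BIBO stable, and assume $G_S$ is minimum-phase. Then there exists a causal, BIBO stable rational transfer function $G_\alpha(z)$ achieving perfect transfer learning from the source to the target system, i.e. such that $G_\alpha(z)G_S(z)=G_T(z)$ (equivalently, for every bounded input $d$, feeding the source output $y_s$ into $G_\alpha$ yields exactly the target output $y_t$), if and only if the relative degree of $G_S$ is less than or equal to the relative degree of $G_T$.
   Context: For a rational transfer function $G(z)=N(z)/D(z)$ with coprime polynomials $N,D$, the relative degree is $\deg D-\deg N$. $G$ is causal if its relative degree is $\geq 0$. $G$ is BIBO stable if all roots of $D(z)$ lie in the open unit disk. $G$ is called minimum-phase if both $G$ and its inverse dynamics $1/G$ are BIBO stable, i.e. all roots of both $D(z)$ and $N(z)$ lie in the open unit disk. Perfect transfer learning means the transfer learning error $e=y_t-y_{TL}$ is identically zero for every bounded input, where $y_{TL}$ is the output of the map driven by $y_s$. *)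

theory Defs
  imports Complex_Main "HOL-Computational_Algebra.Polynomial_Factorial"
begin

text \<open>A rational transfer function G(z) = N(z)/D(z) is represented by the pair (N, D)
  of real polynomials, written with coprime N, D and D nonzero.\<close>

definition is_tf :: "real poly \<Rightarrow> real poly \<Rightarrow> bool" where
  "is_tf N D \<longleftrightarrow> D \<noteq> 0 \<and> coprime N D"

definition rel_deg :: "real poly \<Rightarrow> real poly \<Rightarrow> int" where
  "rel_deg N D = int (degree D) - int (degree N)"

definition causal_tf :: "real poly \<Rightarrow> real poly \<Rightarrow> bool" where
  "causal_tf N D \<longleftrightarrow> rel_deg N D \<ge> 0"

definition bibo_stable :: "real poly \<Rightarrow> real poly \<Rightarrow> bool" where
  "bibo_stable N D \<longleftrightarrow> (\<forall>z::complex. poly (map_poly complex_of_real D) z = 0 \<longrightarrow> cmod z < 1)"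

definition min_phase :: "real poly \<Rightarrow> real poly \<Rightarrow> bool" where
  "min_phase N D \<longleftrightarrow> bibo_stable N D \<and> bibo_stable D N"

end

theory Submission
  imports Defs "HOL-Computational_Algebra.Field_as_Ring"
begin

lemma map_of_real_add:
  "map_poly complex_of_real (p + q) = map_poly complex_of_real p + map_poly complex_of_real q"
  by (rule poly_eqI) (simp add: coeff_map_poly)

lemma map_of_real_mult:
  "map_poly complex_of_real (p * q) = map_poly complex_of_real p * map_poly complex_of_real q"
proof (induction p)
  case 0
  then show ?case by simp
next
  case (pCons a p)
  have "map_poly complex_of_real (pCons a p * q) =
        map_poly complex_of_real (smult a q) + map_poly complex_of_real (pCons 0 (p * q))"
    by (simp add: map_of_real_add)
  also have "\<dots> = smult (of_real a) (map_poly complex_of_real q)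
        + pCons 0 (map_poly complex_of_real p * map_poly complex_of_real q)"
    by (simp add: map_poly_smult map_poly_pCons pCons.IH)
  also have "\<dots> = map_poly complex_of_real (pCons a p) * map_poly complex_of_real q"
    using pCons.hyps by (simp add: map_poly_pCons)
  finally show ?case .
qed

theorem theorem2:
  fixes NS DS NT DT :: "real poly"
  assumes "is_tf NS DS" and "NS \<noteq> 0"
    and "is_tf NT DT" and "NT \<noteq> 0"
    and "bibo_stable NS DS" and "bibo_stable NT DT"
    and "min_phase NS DS"
  shows "(\<exists>Na Da. is_tf Na Da \<and> causal_tf Na Da \<and> bibo_stable Na Da \<and>
             Na * NS * DT = NT * Da * DS)
         \<longleftrightarrow> rel_deg NS DS \<le> rel_deg NT DT"
proof
  have DS: "DS \<noteq> 0" and DT: "DT \<noteq> 0" using assms(1,3) by (auto simp: is_tf_def)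
  assume "\<exists>Na Da. is_tf Na Da \<and> causal_tf Na Da \<and> bibo_stable Na Da \<and>
             Na * NS * DT = NT * Da * DS"
  then obtain Na Da where tf: "is_tf Na Da" and c: "causal_tf Na Da"
    and eq: "Na * NS * DT = NT * Da * DS" by blast
  have Da: "Da \<noteq> 0" using tf by (simp add: is_tf_def)
  have "NT * Da * DS \<noteq> 0" using Da DS assms(4) by simp
  hence Na: "Na \<noteq> 0" using eq by auto
  have "degree (Na * NS * DT) = degree (NT * Da * DS)" using eq by simp
  hence "degree Na + degree NS + degree DT = degree NT + degree Da + degree DS"
    using Na DS DT Da assms(2,4) by (simp add: degree_mult_eq)
  moreover have "degree Na \<le> degree Da" using c by (simp add: causal_tf_def rel_deg_def)
  ultimately show "rel_deg NS DS \<le> rel_deg NT DT" by (simp add: rel_deg_def)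
next
  have DS: "DS \<noteq> 0" and DT: "DT \<noteq> 0" using assms(1,3) by (auto simp: is_tf_def)
  assume le: "rel_deg NS DS \<le> rel_deg NT DT"
  define A where "A = NT * DS"
  define B where "B = NS * DT"
  define g where "g = gcd A B"
  define Na where "Na = A div g"
  define Da where "Da = B div g"
  have A0: "A \<noteq> 0" and B0: "B \<noteq> 0" using DS DT assms(2,4) by (auto simp: A_def B_def)
  have g0: "g \<noteq> 0" using A0 by (simp add: g_def)
  have Ag: "A = Na * g" unfolding Na_def g_def by simp
  have Bg: "B = Da * g" unfolding Da_def g_def by simp
  have Da0: "Da \<noteq> 0" using B0 Bg by auto
  have Na0: "Na \<noteq> 0" using A0 Ag by auto
  have cop: "coprime Na Da" unfolding Na_def Da_def g_def using A0 by (simp add: div_gcd_coprime)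
  have "degree A = degree Na + degree g" using Ag Na0 g0 by (simp add: degree_mult_eq)
  moreover have "degree B = degree Da + degree g" using Bg Da0 g0 by (simp add: degree_mult_eq)
  moreover have "degree A = degree NT + degree DS" using DS assms(4) by (simp add: A_def degree_mult_eq)
  moreover have "degree B = degree NS + degree DT" using DT assms(2) by (simp add: B_def degree_mult_eq)
  ultimately have causal: "causal_tf Na Da" using le by (simp add: causal_tf_def rel_deg_def)
  have stab: "bibo_stable Na Da" unfolding bibo_stable_def
  proof (intro allI impI)
    fix z :: complex
    assume "poly (map_poly complex_of_real Da) z = 0"
    hence "poly (map_poly complex_of_real B) z = 0" using Bg by (simp add: map_of_real_mult)
    hence "poly (map_poly complex_of_real NS) z = 0 \<or> poly (map_poly complex_of_real DT) z = 0"
      by (simp add: B_def map_of_real_mult)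
    thus "cmod z < 1" using assms(6,7) by (auto simp: min_phase_def bibo_stable_def)
  qed
  have "Na * NS * DT = Na * B" by (simp add: B_def mult.assoc)
  also have "\<dots> = Na * Da * g" using Bg by (simp add: mult_ac)
  also have "\<dots> = A * Da" using Ag by (simp add: mult_ac)
  also have "\<dots> = NT * Da * DS" by (simp add: A_def mult_ac)
  finally have "Na * NS * DT = NT * Da * DS" .
  thus "\<exists>Na Da. is_tf Na Da \<and> causal_tf Na Da \<and> bibo_stable Na Da \<and>
             Na * NS * DT = NT * Da * DS"
    using causal stab cop Da0 by (auto simp: is_tf_def)
qed

end
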